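(* Let $P,Q,R$ be unary predicate symbols and $S$ a $0$-ary predicate symbol, and let $$\Gamma = \forall x\, \exists y\, (Py \wedge (Qy \rightarrow Rx)) \wedge \neg \forall x\, Rx, \qquad \Delta = \forall x\, (Px \rightarrow (Qx \vee S)) \rightarrow S.$$ Then the second-order implication $\exists R\,\Gamma\rightarrow\forall S\,\Delta$ is valid in all G-models (for the interpretation of $P,Q$ given by the model): at every state of every G-model it is forced.
   Context: $\neg A$ abbreviates $A\rightarrow\perp$. A G-model is $\mathcal{M}=\langle W,\le,v_0,D,\phi\rangle$: $W$ a nonempty set of states, $\le$ a reflexive transitive relation on $W$, $v_0\in W$ with $v_0\le v$ for all $v\in W$, $D$ a nonempty domain, and for each $k$-ary predicate symbol $P$ a set $\phi(P)\subseteq W\times D^k$ that is monotone: if $v\le w$ and $\langle v,a_1,\dots,a_k\rangle\in\phi(P)$ then $\langle w,a_1,\dots,a_k\rangle\in\phi(P)$. Forcing between states and sentences with constants $\mathbf a$ for elements $a\in D$: $v\Vdash P\mathbf a_1\dots\mathbf a_k$ iff $\langle v,a_1,\dots,a_k\rangle\in\phi(P)$; $\wedge,\vee$ are evaluated pointwise; $v\Vdash A\rightarrow B$ iff for all $w\ge v$, $w\Vdash A$ implies $w\Vdash B$; $\perp$ is never forced; $v\Vdash\exists x A$ iff $v\Vdash A[\mathbf a/x]$ for some $a\in D$; $v\Vdash\forall xA$ iff $v\Vdash A[\mathbf a/x]$ for all $a\in D$. Second-order quantifiers over a $k$-ary predicate variable range over monotone subsets of $W\times D^k$ (for $k=0$: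 upward-closed subsets of $W$): $v\Vdash\exists R\,A$ iff there is a monotone $R'\subseteq W\times D$ such that $v\Vdash A$ in the model obtained by interpreting $R$ as $R'$; $v\Vdash\forall S\,A$ iff for every upward-closed $S'\subseteq W$, $v\Vdash A$ in the model obtained by interpreting $S$ as $S'$. Implication between such formulas is forced as in the first-order clause. *)

theory Defs
  imports Main
begin

text \<open>Ex2 p k A and All2 p k A quantify
  over the k-ary predicate variable p.\<close>

datatype form =
    Atom string "nat list"
  | Bot
  | Conj form form
  | Disj form form
  | Imp form form
  | Ex nat form
  | All nat form
  | Ex2 string nat form
  | All2 string nat form

definition Neg :: "form \<Rightarrow> form" where
  "Neg A = Imp A Bot"

definition mono_rel ::
  "'w set \<Rightarrow> ('w \<Rightarrow> 'w \<Rightarrow> bool) \<Rightarrow> 'd set \<Rightarrow> nat \<Rightarrow> ('w \<Rightarrow> 'd list \<Rightarrow> bool) \<Rightarrow> bool" where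
  "mono_rel W le D k R \<longleftrightarrow>
     (\<forall>v\<in>W. \<forall>w\<in>W. \<forall>as. length as = k \<and> set as \<subseteq> D \<and> le v w \<and> R v as \<longrightarrow> R w as)"

definition gmodel ::
  "'w set \<Rightarrow> ('w \<Rightarrow> 'w \<Rightarrow> bool) \<Rightarrow> 'w \<Rightarrow> 'd set \<Rightarrow> (string \<Rightarrow> nat)
    \<Rightarrow> (string \<Rightarrow> 'w \<Rightarrow> 'd list \<Rightarrow> bool) \<Rightarrow> bool" where
  "gmodel W le v0 D ar I \<longleftrightarrow>
     W \<noteq> {} \<and>
     (\<forall>v\<in>W. le v v) \<and>
     (\<forall>u\<in>W. \<forall>v\<in>W. \<forall>w\<in>W. le u v \<and> le v w \<longrightarrow> le u w) \<and>
     v0 \<in> W \<and> (\<forall>v\<in>W. le v0 v) \<and>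
     D \<noteq> {} \<and>
     (\<forall>p. mono_rel W le D (ar p) (I p))"

text \<open>Forcing relation.  The assignment e gives values in D to the individual
  variables (equivalent to substituting constants for elements of D).\<close>
primrec forces ::
  "'w set \<Rightarrow> ('w \<Rightarrow> 'w \<Rightarrow> bool) \<Rightarrow> 'd set \<Rightarrow> (string \<Rightarrow> 'w \<Rightarrow> 'd list \<Rightarrow> bool)
    \<Rightarrow> (nat \<Rightarrow> 'd) \<Rightarrow> 'w \<Rightarrow> form \<Rightarrow> bool" where
  "forces W le D I e v (Atom p xs) = I p v (map e xs)"
| "forces W le D I e v Bot = False"
| "forces W le D I e v (Conj A B) = (forces W le D I e v A \<and> forces W le D I e v B)"
| "forces W le D I e v (Disj A B) = (forces W le D I e v A \<or> forces W le D I e v B)"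
| "forces W le D I e v (Imp A B) =
     (\<forall>w\<in>W. le v w \<longrightarrow> forces W le D I e w A \<longrightarrow> forces W le D I e w B)"
| "forces W le D I e v (Ex x A) = (\<exists>a\<in>D. forces W le D I (e(x := a)) v A)"
| "forces W le D I e v (All x A) = (\<forall>a\<in>D. forces W le D I (e(x := a)) v A)"
| "forces W le D I e v (Ex2 p k A) =
     (\<exists>R. mono_rel W le D k R \<and> forces W le D (I(p := R)) e v A)"
| "forces W le D I e v (All2 p k A) =
     (\<forall>R. mono_rel W le D k R \<longrightarrow> forces W le D (I(p := R)) e v A)"

text \<open>The formulas of Corollary 3.1; individual variable x is 0, y is 1.\<close>
definition Gamma :: form where
  "Gamma = Conj
     (All 0 (Ex 1 (Conj (Atom ''P'' [1]) (Imp (Atom ''Q'' [1]) (Atom ''R'' [0])))))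
     (Neg (All 0 (Atom ''R'' [0])))"

definition Delta :: form where
  "Delta = Imp (All 0 (Imp (Atom ''P'' [0]) (Disj (Atom ''Q'' [0]) (Atom ''S'' []))))
               (Atom ''S'' [])"

end

theory Submission
  imports Defs
begin

theorem corollary3p1:
  fixes W :: "'w set" and le :: "'w \<Rightarrow> 'w \<Rightarrow> bool" and v0 :: 'w
    and D :: "'d set" and ar :: "string \<Rightarrow> nat"
    and I :: "string \<Rightarrow> 'w \<Rightarrow> 'd list \<Rightarrow> bool" and e :: "nat \<Rightarrow> 'd"
  assumes "gmodel W le v0 D ar I"
    and "ar ''P'' = 1" and "ar ''Q'' = 1"
    and "v \<in> W"
  shows "forces W le D I e v (Imp (Ex2 ''R'' 1 Gamma) (All2 ''S'' 0 Delta))"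
proof -
  have Pm: "mono_rel W le D 1 (I ''P'')" using assms(1,2) unfolding gmodel_def by metis
  have tr: "\<And>a b c. a \<in> W \<Longrightarrow> b \<in> W \<Longrightarrow> c \<in> W \<Longrightarrow> le a b \<Longrightarrow> le b c \<Longrightarrow> le a c"
    using assms(1) unfolding gmodel_def by blast
  show ?thesis
  proof (simp only: forces.simps, intro ballI impI allI)
    fix w S
    assume w: "w \<in> W" "le v w"
      and ex: "\<exists>R. mono_rel W le D 1 R \<and> forces W le D (I(''R'' := R)) e w Gamma"
    then obtain R where R: "forces W le D (I(''R'' := R)) e w Gamma" by blast
    have A: "\<forall>a\<in>D. \<exists>b\<in>D. I ''P'' w [b] \<and>
        (\<forall>t\<in>W. le w t \<longrightarrow> I ''Q'' t [b] \<longrightarrow> R t [a])"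
      and B: "\<forall>t\<in>W. le w t \<longrightarrow> (\<forall>a\<in>D. R t [a]) \<longrightarrow> False"
      using R by (simp_all add: Gamma_def Neg_def)
    show "forces W le D (I(''S'' := S)) e w Delta"
        unfolding Delta_def
      proof (subst forces.simps(5), intro ballI impI)
        fix u assume u: "u \<in> W" "le w u"
        assume H: "forces W le D (I(''S'' := S)) e u
            (All 0 (Imp (Atom ''P'' [0]) (Disj (Atom ''Q'' [0]) (Atom ''S'' []))))"
        have H': "\<forall>a\<in>D. \<forall>t\<in>W. le u t \<longrightarrow> I ''P'' t [a] \<longrightarrow> I ''Q'' t [a] \<or> S t []"
          using H by simp
        have refl: "le u u" using assms(1) u unfolding gmodel_def by blast
        show "forces W le D (I(''S'' := S)) e u (Atom ''S'' [])"
        proof (rule ccontr)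
          assume nS: "\<not> ?thesis"
          hence nS': "\<not> S u []" by simp
          have "\<forall>a\<in>D. R u [a]"
          proof
            fix a assume a: "a \<in> D"
            then obtain b where b: "b \<in> D" "I ''P'' w [b]"
              "\<forall>t\<in>W. le w t \<longrightarrow> I ''Q'' t [b] \<longrightarrow> R t [a]" using A by blast
            have "I ''P'' u [b]"
            proof -
              have "\<forall>as. length as = 1 \<and> set as \<subseteq> D \<and> le w u \<and> I ''P'' w as \<longrightarrow> I ''P'' u as"
                using Pm w(1) u(1) unfolding mono_rel_def by blast
              hence "length [b] = 1 \<and> set [b] \<subseteq> D \<and> le w u \<and> I ''P'' w [b] \<longrightarrow> I ''P'' u [b]"
                by (rule spec)
              thus ?thesis using b u by simp
            qed
            hence "I ''Q'' u [b]" using H' b u refl nS' by blast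
            thus "R u [a]" using b u by blast
          qed
          thus False using B u by blast
        qed
      qed
  qed
qed

end
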